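(* Let $m,n\ge2$ be integers and let $g_n(z)=\frac{z^n+n-1}{n}$ and $g_{m,n}(z)=\frac{(z^m+mn-1)^n}{(mn)^n}$. Both are polynomials having $1$ as a parabolic fixed point with multiplier $1$. For every $0\le r\le1$, with $D_r:=\{z:|z-(1-r)|<r\}$, one has $g_n(\overline{D_r})\subset D_r\cup\{1\}$ and $g_{m,n}(\overline{D_r})\subset D_r\cup\{1\}$. In particular, the immediate parabolic basins of $1$ of $g_n$ and of $g_{m,n}$ both contain the unit disk $\mathbb{D}$. *)

theory Defs
  imports "HOL-Analysis.Analysis"
begin

definition g_poly :: "nat \<Rightarrow> complex \<Rightarrow> complex" where
  "g_poly n z = (z ^ n + of_nat n - 1) / of_nat n"

definition g2_poly :: "nat \<Rightarrow> nat \<Rightarrow> complex \<Rightarrow> complex" where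
  "g2_poly m n z = (z ^ m + of_nat (m * n) - 1) ^ n / (of_nat (m * n)) ^ n"

definition Dr :: "real \<Rightarrow> complex set" where
  "Dr r = ball (complex_of_real (1 - r)) r"

definition basin :: "(complex \<Rightarrow> complex) \<Rightarrow> complex \<Rightarrow> complex set" where
  "basin g p = {z. (\<lambda>k. (g ^^ k) z) \<longlonglongrightarrow> p}"

definition immediate_parabolic_basin ::
  "(complex \<Rightarrow> complex) \<Rightarrow> complex \<Rightarrow> complex set \<Rightarrow> bool" where
  "immediate_parabolic_basin g p U \<longleftrightarrow>
     (\<exists>z \<in> interior (basin g p). U = connected_component_set (interior (basin g p)) z)
     \<and> p \<in> frontier U"

end

theory Submission
  imports Defs
begin


lemma cs_pow:
  fixes z :: complex
  assumes "norm z \<le> 1"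
  shows "(1 - (norm z)^2) * (norm (\<Sum>i<m. z^i))^2 \<le> real m * (1 - (norm z)^(2*m))"
proof -
  let ?t = "norm z"
  have "norm (\<Sum>i<m. z^i) \<le> (\<Sum>i<m. ?t^i)"
    by (rule order_trans[OF norm_sum]) (simp add: norm_power)
  hence "(norm (\<Sum>i<m. z^i))^2 \<le> (\<Sum>i<m. ?t^i)^2"
    by (rule power_mono) simp
  also have "\<dots> \<le> (\<Sum>i<m. (?t^i)^2) * real m"
    using sum_squared_le_sum_of_squares[of "\<lambda>i. ?t^i" "{..<m}"] by simp
  finally have 1: "(norm (\<Sum>i<m. z^i))^2 \<le> (\<Sum>i<m. (?t^2)^i) * real m"
    by (simp add: power_mult[symmetric] mult.commute)
  have 2: "(1 - ?t^2) * (\<Sum>i<m. (?t^2)^i) = 1 - ?t^(2*m)"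
    using one_diff_power_eq[of "?t^2" m] by (simp add: power_mult)
  have 0: "0 \<le> 1 - ?t^2" using assms by (simp add: power_le_one)
  have "(1 - ?t^2) * (norm (\<Sum>i<m. z^i))^2 \<le> (1 - ?t^2) * ((\<Sum>i<m. (?t^2)^i) * real m)"
    using mult_left_mono[OF 1 0] .
  also have "\<dots> = real m * ((1 - ?t^2) * (\<Sum>i<m. (?t^2)^i))" by (simp only: mult_ac)
  also have "\<dots> = real m * (1 - ?t^(2*m))" by (simp only: 2)
  finally show ?thesis .
qed

lemma step_pow:
  fixes z :: complex
  assumes c: "c \<ge> 0" and h: "c * (norm (1 - z))^2 \<le> 1 - (norm z)^2" and m: "m \<ge> 1"
  shows "(c / real m) * (norm (1 - z^m))^2 \<le> 1 - (norm (z^m))^2"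
proof -
  have "0 \<le> 1 - (norm z)^2" using h c by (meson mult_nonneg_nonneg order_trans zero_le_power2)
  hence z1: "norm z \<le> 1" by (simp add: power_le_one_iff abs_le_square_iff)
  let ?S = "(norm (\<Sum>i<m. z^i))^2"
  have e: "(norm (1 - z^m))^2 = (norm (1 - z))^2 * ?S"
    by (simp add: one_diff_power_eq[of z m] norm_mult power_mult_distrib)
  have "c * (norm (1 - z^m))^2 = (c * (norm (1 - z))^2) * ?S" using e by simp
  also have "\<dots> \<le> (1 - (norm z)^2) * ?S" by (rule mult_right_mono[OF h]) simp
  also have "\<dots> \<le> real m * (1 - (norm z)^(2*m))" by (rule cs_pow[OF z1])
  also have "norm z ^ (2*m) = (norm (z^m))^2"
    by (simp add: norm_power power_mult[symmetric] mult.commute)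
  finally have f: "c * (norm (1 - z^m))^2 \<le> real m * (1 - (norm (z^m))^2)" .
  have mp: "real m > 0" using m by simp
  have "(c / real m) * (norm (1 - z^m))^2 = (c * (norm (1 - z^m))^2) / real m" by simp
  also have "\<dots> \<le> 1 - (norm (z^m))^2" using f mp by (simp add: pos_divide_le_eq mult.commute)
  finally show ?thesis .
qed

lemma step_conv:
  fixes u :: complex
  assumes h: "c * (norm (1 - u))^2 \<le> 1 - (norm u)^2" and N: "N > 0"
  shows "(N*c + N - 1) * (norm (1 - (1 - (1 - u) / of_real N)))^2
          \<le> 1 - (norm (1 - (1 - u) / of_real N))^2"
proof -
  obtain x y where u: "u = Complex x y" by (cases u)
  have h': "c * ((1-x)^2 + y^2) \<le> 1 - (x^2 + y^2)"
    using h by (simp add: u cmod_power2)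
  have k1: "(N*c + N - 1) * (((1-x)/N)^2 + (y/N)^2) = (N*(c*((1-x)^2+y^2)) + (N-1)*((1-x)^2+y^2)) / N^2"
    using N by (simp add: field_simps power2_eq_square)
  have k2: "1 - ((1 - (1-x)/N)^2 + (y/N)^2) = (N*(1-(x^2+y^2)) + (N-1)*((1-x)^2+y^2))/N^2"
    using N by (simp add: field_simps power2_eq_square)
  have "N * (c * ((1-x)^2 + y^2)) \<le> N * (1 - (x^2 + y^2))"
    using mult_left_mono[OF h'] N by simp
  hence "(N*c + N - 1) * (((1-x)/N)^2 + (y/N)^2) \<le> 1 - ((1 - (1-x)/N)^2 + (y/N)^2)"
    unfolding k1 k2 by (intro divide_right_mono add_right_mono) auto
  moreover have e1: "1 - (1 - u) / of_real N = Complex (1 - (1-x)/N) (y/N)"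
    by (simp add: u complex_eq_iff)
  moreover have e2: "1 - (1 - (1 - u) / of_real N) = Complex ((1-x)/N) (-(y/N))"
    by (simp add: u complex_eq_iff)
  ultimately show ?thesis by (simp only: e1 e2 cmod_power2 complex.sel power2_minus)
qed


lemma disk_sq: "(dist (complex_of_real a) z)^2 = (a - Re z)^2 + (Im z)^2"
  by (simp add: dist_norm cmod_power2 power2_commute)

lemma disk_char_le:
  assumes "r \<ge> 0"
  shows "dist (complex_of_real (1-r)) z \<le> r \<longleftrightarrow> (1-r)*(norm (1-z))^2 \<le> r*(1-(norm z)^2)"
proof -
  have "dist (complex_of_real (1-r)) z \<le> r \<longleftrightarrow> (dist (complex_of_real (1-r)) z)^2 \<le> r^2"
    using assms by (metis abs_le_square_iff abs_of_nonneg zero_le_dist)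
  also have "\<dots> \<longleftrightarrow> (1-r)*(norm (1-z))^2 \<le> r*(1-(norm z)^2)"
    unfolding disk_sq cmod_power2 by (simp add: power2_eq_square algebra_simps)
  finally show ?thesis .
qed

lemma disk_char_less:
  assumes "r \<ge> 0"
  shows "dist (complex_of_real (1-r)) z < r \<longleftrightarrow> (1-r)*(norm (1-z))^2 < r*(1-(norm z)^2)"
proof -
  have "dist (complex_of_real (1-r)) z < r \<longleftrightarrow> (dist (complex_of_real (1-r)) z)^2 < r^2"
    using assms by (metis abs_le_square_iff abs_of_nonneg zero_le_dist not_le)
  also have "\<dots> \<longleftrightarrow> (1-r)*(norm (1-z))^2 < r*(1-(norm z)^2)"
    unfolding disk_sq cmod_power2 by (simp add: power2_eq_square algebra_simps)
  finally show ?thesis .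
qed

lemma generic_closure:
  fixes f :: "complex \<Rightarrow> complex"
  assumes F1: "\<And>c z. c \<ge> 0 \<Longrightarrow> c * (norm (1-z))^2 \<le> 1 - (norm z)^2 \<Longrightarrow>
                 (c+1) * (norm (1 - f z))^2 \<le> 1 - (norm (f z))^2"
    and r: "0 \<le> r" "r \<le> 1"
  shows "f ` closure (Dr r) \<subseteq> Dr r \<union> {1}"
proof (cases "r = 0")
  case True thus ?thesis by (simp add: Dr_def)
next
  case False
  hence rp: "r > 0" using r by simp
  show ?thesis
  proof
    fix w assume "w \<in> f ` closure (Dr r)"
    then obtain z where z: "z \<in> cball (complex_of_real (1-r)) r" and w: "w = f z"
      using rp by (auto simp: Dr_def)
    have h: "(1-r)*(norm (1-z))^2 \<le> r*(1-(norm z)^2)"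
      using z disk_char_le[of r z] rp by simp
    define c where "c = (1-r)/r"
    have c0: "c \<ge> 0" using r rp by (simp add: c_def)
    have "c * (norm (1-z))^2 \<le> 1 - (norm z)^2"
      using h rp by (simp add: c_def field_simps)
    from F1[OF c0 this] have h2: "(c+1) * (norm (1 - w))^2 \<le> 1 - (norm w)^2" by (simp add: w)
    have rc: "r * (c+1) = 1" using rp by (simp add: c_def field_simps)
    have h3: "(norm (1 - w))^2 \<le> r * (1 - (norm w)^2)"
      using mult_left_mono[OF h2, of r] rp rc by (simp add: mult.assoc[symmetric])
    show "w \<in> Dr r \<union> {1}"
    proof (cases "w = 1")
      case False
      hence "(norm (1-w))^2 > 0" by simp
      hence "(1-r)*(norm (1-w))^2 < r*(1-(norm w)^2)" using h3 rp
        by (smt (verit) mult_less_cancel_right2)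
      thus ?thesis using disk_char_less[of r w] rp by (simp add: Dr_def)
    qed simp
  qed
qed

lemma bound_from:
  fixes w :: complex
  assumes "k * (norm (1-w))^2 \<le> 1 - (norm w)^2" "k \<ge> 0"
  shows "k * norm (1-w) \<le> 2"
proof -
  have a: "1 - (norm w)^2 \<le> 2 * norm (1-w)"
  proof (cases "norm w \<le> 1")
    case True
    have t: "1 - norm w \<le> norm (1 - w)" by (metis norm_one norm_triangle_ineq2)
    have "1 - (norm w)^2 = (1 - norm w) * (1 + norm w)" by (simp add: power2_eq_square algebra_simps)
    also have "\<dots> \<le> (1 - norm w) * 2" using True by (intro mult_left_mono) auto
    also have "\<dots> = 2 - 2 * norm w" by simp
    finally show ?thesis using t by linarith
  next
    case False
    hence "1 - (norm w)^2 < 0" by (simp add: power_less_one_iff)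
    thus ?thesis by (smt (verit) norm_ge_zero)
  qed
  show ?thesis
  proof (cases "norm (1-w) = 0")
    case False
    hence p: "norm (1-w) > 0" by simp
    have "(k * norm (1-w)) * norm (1-w) \<le> 2 * norm (1-w)"
      using assms(1) a by (simp add: power2_eq_square mult.assoc)
    thus ?thesis using p by simp
  qed simp
qed

lemma generic_basin:
  fixes f :: "complex \<Rightarrow> complex"
  assumes F1: "\<And>c z. c \<ge> 0 \<Longrightarrow> c * (norm (1-z))^2 \<le> 1 - (norm z)^2 \<Longrightarrow>
                 (c+1) * (norm (1 - f z))^2 \<le> 1 - (norm (f z))^2"
    and F3: "\<And>t. t \<ge> 1 \<Longrightarrow> \<exists>t'\<ge>t. f (complex_of_real t) = complex_of_real t'"
  shows "\<exists>U. immediate_parabolic_basin f 1 U \<and> ball 0 1 \<subseteq> U"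
proof -
  have it: "real k * (norm (1 - (f^^k) z))^2 \<le> 1 - (norm ((f^^k) z))^2"
    if "norm z \<le> 1" for z k
  proof (induction k)
    case 0 thus ?case using that by (simp add: power_le_one)
  next
    case (Suc k)
    from F1[OF _ Suc.IH] show ?case by (simp add: add.commute)
  qed
  have inb: "z \<in> basin f 1" if "norm z < 1" for z
  proof -
    have ev: "eventually (\<lambda>k. norm ((f^^k) z - 1) \<le> 2 / real k) sequentially"
      using eventually_ge_at_top[of 1]
    proof (rule eventually_mono)
      fix k :: nat assume k: "k \<ge> 1"
      have "real k * norm (1 - (f^^k) z) \<le> 2"
        using bound_from[OF it] that by simp
      thus "norm ((f^^k) z - 1) \<le> 2 / real k" using k
        by (simp add: field_simps norm_minus_commute)
    qed
    have "(\<lambda>k. (f^^k) z - 1) \<longlonglongrightarrow> 0"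
      by (rule Lim_null_comparison[OF ev]) (rule lim_const_over_n)
    from tendsto_add[OF this tendsto_const[of 1]] show ?thesis
      by (simp add: basin_def)
  qed
  have sub: "ball 0 1 \<subseteq> interior (basin f 1)"
    by (rule interior_maximal) (auto intro: inb)
  define U where "U = connected_component_set (interior (basin f 1)) 0"
  have bU: "ball 0 1 \<subseteq> U" unfolding U_def
    by (rule connected_component_maximal) (use sub in auto)
  have "1 \<in> closure U"
  proof -
    have "1 \<in> closure (ball (0::complex) 1)" by simp
    thus ?thesis using closure_mono[OF bU] by blast
  qed
  moreover have "1 \<notin> interior U"
  proof
    assume "1 \<in> interior U"
    then obtain e where e: "e > 0" "ball 1 e \<subseteq> U"
      by (meson mem_interior)
    have "U \<subseteq> basin f 1" unfolding U_def
      using connected_component_subset interior_subset by blast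
    moreover have "complex_of_real (1 + e/2) \<in> ball 1 e"
      using e by (simp add: dist_norm)
    ultimately have xb: "complex_of_real (1 + e/2) \<in> basin f 1" using e by blast
    have orb: "\<exists>t\<ge>1 + e/2. (f^^k) (complex_of_real (1 + e/2)) = complex_of_real t" for k
    proof (induction k)
      case 0 thus ?case by auto
    next
      case (Suc k)
      then obtain t where t: "t \<ge> 1 + e/2" "(f^^k) (complex_of_real (1 + e/2)) = complex_of_real t"
        by blast
      from F3[of t] t e obtain t' where "t' \<ge> t" "f (complex_of_real t) = complex_of_real t'" by auto
      thus ?case using t by auto
    qed
    from xb have "(\<lambda>k. (f^^k) (complex_of_real (1 + e/2))) \<longlonglongrightarrow> 1" by (simp add: basin_def)
    then obtain N where N: "\<And>k. k \<ge> N \<Longrightarrow> dist ((f^^k) (complex_of_real (1 + e/2))) 1 < e/2"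
      using e unfolding lim_sequentially by (meson half_gt_zero)
    obtain t where t: "t \<ge> 1 + e/2" "(f^^N) (complex_of_real (1 + e/2)) = complex_of_real t"
      using orb by blast
    have "dist (complex_of_real t) 1 = \<bar>t - 1\<bar>"
      by (metis dist_real_def dist_of_real of_real_1)
    thus False using N[of N] t e by (simp split: abs_split)
  qed
  ultimately have "1 \<in> frontier U" by (simp add: frontier_def)
  moreover have "0 \<in> interior (basin f 1)" using sub by auto
  ultimately have "immediate_parabolic_basin f 1 U"
    unfolding immediate_parabolic_basin_def U_def by blast
  thus ?thesis using bU by blast
qed


lemma mono_c: "(a::real) \<le> b \<Longrightarrow> b*x \<le> y \<Longrightarrow> 0 \<le> x \<Longrightarrow> a*x \<le> y"
  by (meson mult_right_mono order_trans)

lemma g_eq: "n > 0 \<Longrightarrow> g_poly n z = 1 - (1 - z^n) / complex_of_real (real n)"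
  by (simp add: g_poly_def field_simps)

lemma g2_eq:
  assumes "m > 0" "n > 0"
  shows "g2_poly m n z = (1 - (1 - z^m) / complex_of_real (real (m*n)))^n"
proof -
  have "(z^m + of_nat(m*n) - 1)/of_nat(m*n) = 1 - (1 - z^m) / complex_of_real (real (m*n))"
    using assms by (simp add: field_simps)
  thus ?thesis by (simp add: g2_poly_def power_divide[symmetric])
qed

lemma step_g:
  assumes n: "n \<ge> 2" and c: "c \<ge> 0" and h: "c * (norm (1-z))^2 \<le> 1 - (norm z)^2"
  shows "(c+1) * (norm (1 - g_poly n z))^2 \<le> 1 - (norm (g_poly n z))^2"
proof -
  have p: "(c / real n) * (norm (1 - z^n))^2 \<le> 1 - (norm (z^n))^2"
    using step_pow[OF c h] n by simp
  have q: "(real n * (c / real n) + real n - 1) * (norm (1 - g_poly n z))^2 \<le> 1 - (norm (g_poly n z))^2"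
    using step_conv[OF p, of "real n"] n by (simp add: g_eq)
  have "real n * (c / real n) = c" using n by simp
  hence "c + 1 \<le> real n * (c / real n) + real n - 1" using n by simp
  thus ?thesis using mono_c[OF _ q] by simp
qed

lemma step_g2:
  assumes m: "m \<ge> 2" and n: "n \<ge> 2" and c: "c \<ge> 0" and h: "c * (norm (1-z))^2 \<le> 1 - (norm z)^2"
  shows "(c+1) * (norm (1 - g2_poly m n z))^2 \<le> 1 - (norm (g2_poly m n z))^2"
proof -
  define v where "v = 1 - (1 - z^m) / complex_of_real (real (m*n))"
  have p: "(c / real m) * (norm (1 - z^m))^2 \<le> 1 - (norm (z^m))^2"
    using step_pow[OF c h] m by simp
  define c2 where "c2 = real (m*n) * (c / real m) + real (m*n) - 1"
  have q: "c2 * (norm (1 - v))^2 \<le> 1 - (norm v)^2"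
    using step_conv[OF p, of "real (m*n)"] m n unfolding c2_def v_def by simp
  have c2e: "c2 = real n * c + real m * real n - 1" using m by (simp add: c2_def)
  have c20: "c2 \<ge> 0"
  proof -
    have "2*2 \<le> m * n" using mult_le_mono[OF m n] .
    hence "real m * real n \<ge> 1" using m n by (simp flip: of_nat_mult)
    moreover have "real n * c \<ge> 0" using c by simp
    ultimately show ?thesis using c2e by linarith
  qed
  have r: "(c2 / real n) * (norm (1 - v^n))^2 \<le> 1 - (norm (v^n))^2"
    using step_pow[OF c20 q] n by simp
  have "c2 / real n = c + real m - 1 / real n" using n by (simp add: c2e field_simps)
  moreover have "1 / real n \<le> 1" using n by simp
  ultimately have "c + 1 \<le> c2 / real n" using m by simp
  from mono_c[OF this r] show ?thesis using m n by (simp add: g2_eq v_def)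
qed

lemma real_g:
  assumes n: "n \<ge> 2" and t: "t \<ge> 1"
  shows "\<exists>t'\<ge>t. g_poly n (complex_of_real t) = complex_of_real t'"
proof (intro exI conjI)
  show "g_poly n (complex_of_real t) = complex_of_real ((t^n + real n - 1)/real n)"
    by (simp add: g_poly_def)
  have "1 + real n * (t - 1) \<le> (1 + (t-1))^n" by (rule Bernoulli_inequality) (use t in simp)
  hence "1 + real n * (t - 1) \<le> t^n" by simp
  thus "t \<le> (t^n + real n - 1)/real n" using n by (simp add: field_simps algebra_simps)
qed

lemma real_g2:
  assumes m: "m \<ge> 2" and n: "n \<ge> 2" and t: "t \<ge> 1"
  shows "\<exists>t'\<ge>t. g2_poly m n (complex_of_real t) = complex_of_real t'"
proof (intro exI conjI)
  define u where "u = (t^m + real (m*n) - 1)/real (m*n)"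
  show "g2_poly m n (complex_of_real t) = complex_of_real (u^n)"
    using m n by (simp add: g2_poly_def u_def power_divide)
  have "1 + real m * (t - 1) \<le> (1 + (t-1))^m" by (rule Bernoulli_inequality) (use t in simp)
  hence tm: "1 + real m * (t - 1) \<le> t^m" by simp
  have mn: "real (m*n) > 0" using m n by simp
  have "u * real (m*n) = t^m + real (m*n) - 1" using mn unfolding u_def by (metis nonzero_eq_divide_eq less_irrefl)
  hence "u * real (m*n) \<ge> real (m*n) + real m * (t-1)" using tm by simp
  moreover have "(1 + (t-1)/real n) * (real m * real n) = real (m*n) + real m * (t-1)"
    using n by (simp add: field_simps)
  ultimately have "u * (real m * real n) \<ge> (1 + (t-1)/real n) * (real m * real n)"
    by simp
  moreover have "real m * real n > 0" using m n by simp
  ultimately have u1: "u \<ge> 1 + (t-1)/real n"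
    by (meson mult_le_cancel_right_pos)
  have "(t-1)/real n \<ge> 0" using t by simp
  hence "-1 \<le> u - 1" using u1 by linarith
  hence "1 + real n * (u - 1) \<le> (1 + (u-1))^n" by (rule Bernoulli_inequality)
  hence "1 + real n * (u - 1) \<le> u^n" by simp
  moreover have "real n * (u - 1) \<ge> t - 1"
  proof -
    have "real n * (u - 1) \<ge> real n * ((t-1)/real n)" using u1 by (intro mult_left_mono) auto
    thus ?thesis using n by simp
  qed
  ultimately show "t \<le> u^n" by linarith
qed

lemma deriv_g:
  assumes a: "n \<ge> 2"
  shows "(g_poly n has_field_derivative 1) (at 1)"
proof -
  have e: "g_poly n = (\<lambda>z. (z^n + of_nat n - 1) / of_nat n)" by (rule ext) (simp add: g_poly_def)
  have nz: "complex_of_nat n \<noteq> 0" using a by simp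
  show ?thesis unfolding e
  apply (rule derivative_eq_intros refl)+
  using nz apply simp_all
  done
qed

lemma deriv_g2:
  assumes a: "m \<ge> 2" "n \<ge> 2"
  shows "(g2_poly m n has_field_derivative 1) (at 1)"
proof -
  have e: "g2_poly m n = (\<lambda>z. (z^m + of_nat (m*n) - 1)^n / of_nat (m*n)^n)"
    by (rule ext) (simp add: g2_poly_def)
  obtain k where k: "n = Suc k" using a by (cases n) auto
  have nz: "complex_of_nat (m*n) \<noteq> 0" using a by simp
  have e2: "of_nat n * (of_nat (m*n)::complex)^k * of_nat m = of_nat (m*n)^n"
    by (simp add: k algebra_simps)
  show ?thesis unfolding e
  apply (rule derivative_eq_intros refl)+
  using nz e2 apply (simp_all add: k)
  done
qed

theorem lemma2p5:
  fixes m n :: nat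
  assumes "m \<ge> 2" and "n \<ge> 2"
  shows "g_poly n 1 = 1 \<and> (g_poly n has_field_derivative 1) (at 1)
       \<and> g2_poly m n 1 = 1 \<and> (g2_poly m n has_field_derivative 1) (at 1)
       \<and> (\<forall>r::real. 0 \<le> r \<and> r \<le> 1 \<longrightarrow>
            g_poly n ` closure (Dr r) \<subseteq> Dr r \<union> {1}
          \<and> g2_poly m n ` closure (Dr r) \<subseteq> Dr r \<union> {1})
       \<and> (\<exists>U. immediate_parabolic_basin (g_poly n) 1 U \<and> ball 0 1 \<subseteq> U)
       \<and> (\<exists>U. immediate_parabolic_basin (g2_poly m n) 1 U \<and> ball 0 1 \<subseteq> U)"
proof (intro conjI allI impI)
  show "g_poly n 1 = 1" using assms by (simp add: g_poly_def)
  show "g2_poly m n 1 = 1" using assms by (simp add: g2_poly_def)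
  show "(g_poly n has_field_derivative 1) (at 1)" by (rule deriv_g[OF assms(2)])
  show "(g2_poly m n has_field_derivative 1) (at 1)" by (rule deriv_g2[OF assms])
  show "\<exists>U. immediate_parabolic_basin (g_poly n) 1 U \<and> ball 0 1 \<subseteq> U"
    by (rule generic_basin[OF step_g[OF assms(2)] real_g[OF assms(2)]])
  show "\<exists>U. immediate_parabolic_basin (g2_poly m n) 1 U \<and> ball 0 1 \<subseteq> U"
    by (rule generic_basin[OF step_g2[OF assms] real_g2[OF assms]])
next
  fix r :: real assume r: "0 \<le> r \<and> r \<le> 1"
  show "g_poly n ` closure (Dr r) \<subseteq> Dr r \<union> {1}"
    using r by (intro generic_closure[OF step_g[OF assms(2)]]) auto
next
  fix r :: real assume r: "0 \<le> r \<and> r \<le> 1"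
  show "g2_poly m n ` closure (Dr r) \<subseteq> Dr r \<union> {1}"
    using r by (intro generic_closure[OF step_g2[OF assms]]) auto
qed

end
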